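(* For every positive integer $n$, the variety of complex $n$-dimensional nilpotent binary Leibniz algebras contains at least one rigid algebra.
   Context: An algebra is a Leibniz algebra if it satisfies $(xy)z=(xz)y+x(yz)$; it is a binary Leibniz algebra if every subalgebra generated by two elements is a Leibniz algebra; it is nilpotent if for some $m$ every product of $m$ elements (any bracketing) vanishes. The variety is the Zariski-closed set of bilinear products on a fixed $n$-dimensional complex vector space $V$ (identified with structure constants in $\mathbb{C}^{n^3}$) satisfying these conditions, with $GL(V)$ acting by $(g*\mu)(x,y)=g\mu(g^{-1}x,g^{-1}y)$. An algebra is rigid if its $GL(V)$-orbit is Zariski-open in the variety. *)

theory Defs
  imports "HOL-Analysis.Analysis"
begin

text \<open>An n-dimensional complex vector space is modelled as complex^'n for a finite
  type 'n (n = CARD('n) >= 1).  A bilinear product is given by its structure constants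
  c :: 'n \<times> 'n \<times> 'n \<Rightarrow> complex, i.e. a point of C^(n^3).\<close>

type_synonym 'n sconst = "'n \<times> 'n \<times> 'n \<Rightarrow> complex"

definition alg_mult :: "'n::finite sconst \<Rightarrow> complex^'n \<Rightarrow> complex^'n \<Rightarrow> complex^'n" where
  "alg_mult c x y = (\<chi> k. \<Sum>i\<in>UNIV. \<Sum>j\<in>UNIV. x$i * y$j * c (i, j, k))"

definition sconst_of :: "(complex^'n \<Rightarrow> complex^'n \<Rightarrow> complex^'n) \<Rightarrow> 'n::finite sconst" where
  "sconst_of B = (\<lambda>(i, j, k). B (axis i 1) (axis j 1) $ k)"

definition gl_act :: "complex^'n^'n \<Rightarrow> 'n::finite sconst \<Rightarrow> 'n sconst" where
  "gl_act g c = sconst_of (\<lambda>x y. g *v alg_mult c (matrix_inv g *v x) (matrix_inv g *v y))"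

definition orbit :: "'n::finite sconst \<Rightarrow> 'n sconst set" where
  "orbit c = {gl_act g c | g. invertible g}"

definition leibniz_identity :: "'n::finite sconst \<Rightarrow> complex^'n \<Rightarrow> complex^'n \<Rightarrow> complex^'n \<Rightarrow> bool" where
  "leibniz_identity c x y z \<longleftrightarrow>
     alg_mult c (alg_mult c x y) z = alg_mult c (alg_mult c x z) y + alg_mult c x (alg_mult c y z)"

inductive_set gen_subalg :: "'n::finite sconst \<Rightarrow> complex^'n \<Rightarrow> complex^'n \<Rightarrow> (complex^'n) set"
  for c a b where
  gen_a: "a \<in> gen_subalg c a b"
| gen_b: "b \<in> gen_subalg c a b"
| gen_add: "x \<in> gen_subalg c a b \<Longrightarrow> y \<in> gen_subalg c a b \<Longrightarrow> x + y \<in> gen_subalg c a b"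
| gen_smult: "x \<in> gen_subalg c a b \<Longrightarrow> r *s x \<in> gen_subalg c a b"
| gen_mult: "x \<in> gen_subalg c a b \<Longrightarrow> y \<in> gen_subalg c a b \<Longrightarrow> alg_mult c x y \<in> gen_subalg c a b"

definition binary_leibniz :: "'n::finite sconst \<Rightarrow> bool" where
  "binary_leibniz c \<longleftrightarrow> (\<forall>a b. \<forall>x\<in>gen_subalg c a b. \<forall>y\<in>gen_subalg c a b. \<forall>z\<in>gen_subalg c a b.
      leibniz_identity c x y z)"

inductive is_product :: "'n::finite sconst \<Rightarrow> nat \<Rightarrow> complex^'n \<Rightarrow> bool" for c where
  prod_one: "is_product c 1 x"
| prod_mult: "is_product c i u \<Longrightarrow> is_product c j v \<Longrightarrow> is_product c (i + j) (alg_mult c u v)"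

definition nilpotent_alg :: "'n::finite sconst \<Rightarrow> bool" where
  "nilpotent_alg c \<longleftrightarrow> (\<exists>m>0. \<forall>x. is_product c m x \<longrightarrow> x = 0)"

definition nbl_variety :: "'n::finite sconst set" where
  "nbl_variety = {c. nilpotent_alg c \<and> binary_leibniz c}"

inductive poly_fun :: "(('a \<Rightarrow> complex) \<Rightarrow> complex) \<Rightarrow> bool" where
  pf_const: "poly_fun (\<lambda>_. a)"
| pf_var: "poly_fun (\<lambda>x. x i)"
| pf_add: "poly_fun p \<Longrightarrow> poly_fun q \<Longrightarrow> poly_fun (\<lambda>x. p x + q x)"
| pf_mult: "poly_fun p \<Longrightarrow> poly_fun q \<Longrightarrow> poly_fun (\<lambda>x. p x * q x)"

definition zariski_closed :: "('a \<Rightarrow> complex) set \<Rightarrow> bool" where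
  "zariski_closed S \<longleftrightarrow> (\<exists>P. (\<forall>p\<in>P. poly_fun p) \<and> S = {x. \<forall>p\<in>P. p x = 0})"

definition zariski_open_in :: "('a \<Rightarrow> complex) set \<Rightarrow> ('a \<Rightarrow> complex) set \<Rightarrow> bool" where
  "zariski_open_in X U \<longleftrightarrow> (\<exists>Z. zariski_closed Z \<and> U = X - Z)"

definition rigid_in :: "'n::finite sconst set \<Rightarrow> 'n sconst \<Rightarrow> bool" where
  "rigid_in X c \<longleftrightarrow> c \<in> X \<and> zariski_open_in X (orbit c)"

end

theory Submission
  imports Defs
begin

lemma minv: assumes "invertible (g::'a::semiring_1^'n^'n)"
  shows "g ** matrix_inv g = mat 1" "matrix_inv g ** g = mat 1"
  using someI_ex[OF assms[unfolded invertible_def]] unfolding matrix_inv_def by auto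

lemma minv_v: assumes "invertible (g::'a::semiring_1^'n^'n)"
  shows "g *v (matrix_inv g *v x) = x" "matrix_inv g *v (g *v x) = x"
  using minv[OF assms] by (simp_all add: matrix_vector_mul_assoc)

lemma alg_mult_nth: "alg_mult c x y $ k = (\<Sum>i\<in>UNIV. \<Sum>j\<in>UNIV. x$i * y$j * c (i, j, k))"
  by (simp add: alg_mult_def)

lemma axis_comp: "axis i x $ j = (if j = i then x else 0)"
  by (simp add: axis_def)

lemma alg_mult_axis: "alg_mult c (axis i 1) (axis j 1) $ k = c (i, j, k)"
proof -
  have e: "\<And>i'. (\<lambda>j'. axis i 1 $ i' * axis j (1::complex) $ j' * c (i', j', k)) = (\<lambda>j'. if j' = j then axis i 1 $ i' * c (i', j, k) else 0)"
    by (auto simp: axis_comp)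
  have e2: "(\<lambda>i'. axis i (1::complex) $ i' * c (i', j, k)) = (\<lambda>i'. if i' = i then c (i, j, k) else 0)"
    by (auto simp: axis_comp)
  have e3: "(\<Sum>i'\<in>UNIV. axis i (1::complex) $ i' * c (i', j, k)) = c (i, j, k)"
    unfolding e2 by simp
  show ?thesis unfolding alg_mult_nth e using e3 by simp
qed

lemma sconst_alg: "sconst_of (alg_mult c) = c"
  by (auto simp: sconst_of_def alg_mult_axis)

lemma alg_mult_sum_left: "alg_mult c (\<Sum>i\<in>I. f i) y = (\<Sum>i\<in>I. alg_mult c (f i) y)"
proof (cases "finite I")
  case True then show ?thesis
  by (induction I rule: finite_induct) (auto simp: vec_eq_iff alg_mult_nth algebra_simps sum.distrib)
qed (simp add: vec_eq_iff alg_mult_nth)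

lemma alg_mult_sum_right: "alg_mult c y (\<Sum>i\<in>I. f i) = (\<Sum>i\<in>I. alg_mult c y (f i))"
proof (cases "finite I")
  case True then show ?thesis
  by (induction I rule: finite_induct) (auto simp: vec_eq_iff alg_mult_nth algebra_simps sum.distrib)
qed (simp add: vec_eq_iff alg_mult_nth)

lemma alg_mult_scale_left: "alg_mult c (r *s x) y = r *s alg_mult c x y"
  by (simp add: vec_eq_iff alg_mult_nth sum_distrib_left mult.assoc)
lemma alg_mult_scale_right: "alg_mult c x (r *s y) = r *s alg_mult c x y"
  by (simp add: vec_eq_iff alg_mult_nth sum_distrib_left algebra_simps)
lemma alg_mult_add_left: "alg_mult c (x + z) y = alg_mult c x y + alg_mult c z y"
  by (simp add: vec_eq_iff alg_mult_nth sum.distrib algebra_simps)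
lemma alg_mult_add_right: "alg_mult c x (y + z) = alg_mult c x y + alg_mult c x z"
  by (simp add: vec_eq_iff alg_mult_nth sum.distrib algebra_simps)
lemma alg_mult_0 [simp]: "alg_mult c 0 y = 0" "alg_mult c x 0 = 0"
  by (simp_all add: vec_eq_iff alg_mult_nth)

lemma mv_sum: "(g::complex^'n^'m) *v (\<Sum>i\<in>I. f i) = (\<Sum>i\<in>I. g *v f i)"
proof (cases "finite I")
  case True then show ?thesis
    by (induction I rule: finite_induct) (auto simp: matrix_vector_right_distrib)
qed simp

lemma mv_scale: "(g::complex^'n^'m) *v (r *s x) = r *s (g *v x)"
  by (simp add: vec_eq_iff matrix_vector_mult_def sum_distrib_left algebra_simps)

lemma mv_expand: "(g::complex^'n^'m) *v x = (\<Sum>i\<in>UNIV. x$i *s (g *v axis i 1))"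
proof -
  have "g *v x = g *v (\<Sum>i\<in>UNIV. x$i *s axis i 1)" by (simp add: basis_expansion)
  also have "\<dots> = (\<Sum>i\<in>UNIV. x$i *s (g *v axis i 1))" by (simp add: mv_sum mv_scale)
  finally show ?thesis .
qed

lemma smult_sum: "(r::complex) *s (\<Sum>i\<in>I. f i) = (\<Sum>i\<in>I. r *s f i)"
proof (cases "finite I")
  case True then show ?thesis
    by (induction I rule: finite_induct) (auto simp: vector_ssub_ldistrib vec_eq_iff algebra_simps)
qed simp

lemma alg_mult_expand2:
  "alg_mult c (\<Sum>i\<in>UNIV. a i *s u i) (\<Sum>j\<in>UNIV. b j *s v j) =
     (\<Sum>i\<in>UNIV. \<Sum>j\<in>UNIV. (a i * b j) *s alg_mult c (u i) (v j))"
  unfolding alg_mult_sum_left alg_mult_sum_right alg_mult_scale_left alg_mult_scale_right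
  unfolding smult_sum vector_smult_assoc
  by (rule trans[OF sum.swap]) (simp add: mult.commute)

lemma alg_mult_expand:
  "alg_mult c x y = (\<Sum>i\<in>UNIV. \<Sum>j\<in>UNIV. (x$i * y$j) *s alg_mult c (axis i 1) (axis j 1))"
proof -
  have "alg_mult c x y = alg_mult c (\<Sum>i\<in>UNIV. x$i *s axis i 1) (\<Sum>j\<in>UNIV. y$j *s axis j 1)"
    by (simp only: basis_expansion)
  also have "\<dots> = (\<Sum>i\<in>UNIV. \<Sum>j\<in>UNIV. (x$i * y$j) *s alg_mult c (axis i 1) (axis j 1))"
    by (rule alg_mult_expand2)
  finally show ?thesis .
qed

lemma alg_sconst:
  assumes "\<And>x y. B x y = (\<Sum>i\<in>UNIV. \<Sum>j\<in>UNIV. (x$i * y$j) *s B (axis i 1) (axis j 1))"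
  shows "alg_mult (sconst_of B) x y = B x y"
proof -
  have "alg_mult (sconst_of B) x y = (\<Sum>i\<in>UNIV. \<Sum>j\<in>UNIV. (x$i * y$j) *s alg_mult (sconst_of B) (axis i 1) (axis j 1))"
    by (rule alg_mult_expand)
  also have "\<dots> = (\<Sum>i\<in>UNIV. \<Sum>j\<in>UNIV. (x$i * y$j) *s B (axis i 1) (axis j 1))"
  proof -
    have "\<And>i j. alg_mult (sconst_of B) (axis i 1) (axis j 1) = B (axis i 1) (axis j 1)"
      unfolding vec_eq_iff alg_mult_axis sconst_of_def by simp
    then show ?thesis by simp
  qed
  finally show ?thesis using assms[of x y] by simp
qed

lemma gl_act_mult:
  "alg_mult (gl_act g c) x y = g *v alg_mult c (matrix_inv g *v x) (matrix_inv g *v y)"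
  unfolding gl_act_def
proof (rule alg_sconst)
  fix x y :: "complex^'a"
  let ?h = "matrix_inv g"
  have "g *v alg_mult c (?h *v x) (?h *v y) = g *v alg_mult c (\<Sum>i\<in>UNIV. x$i *s (?h *v axis i 1)) (\<Sum>j\<in>UNIV. y$j *s (?h *v axis j 1))"
    by (subst (1 2) mv_expand) (rule refl)
  also have "\<dots> = (\<Sum>i\<in>UNIV. \<Sum>j\<in>UNIV. (x$i * y$j) *s (g *v alg_mult c (?h *v axis i 1) (?h *v axis j 1)))"
    by (simp add: alg_mult_expand2 mv_sum mv_scale)
  finally show "g *v alg_mult c (?h *v x) (?h *v y) = (\<Sum>i\<in>UNIV. \<Sum>j\<in>UNIV. (x$i * y$j) *s (g *v alg_mult c (?h *v axis i 1) (?h *v axis j 1)))" .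
qed

lemma iso_gl_act:
  assumes g: "invertible g" and h: "\<And>u w. alg_mult c (g *v u) (g *v w) = g *v alg_mult N u w"
  shows "gl_act g N = c"
proof -
  have "(\<lambda>x y. g *v alg_mult N (matrix_inv g *v x) (matrix_inv g *v y)) = alg_mult c"
    by (intro ext) (simp add: h[symmetric] minv_v[OF g])
  then show ?thesis unfolding gl_act_def by (simp add: sconst_alg)
qed


lemma g_iso_mult:
  assumes g: "invertible g"
  shows "alg_mult (gl_act g N) (g *v u) (g *v w) = g *v alg_mult N u w"
  by (simp add: gl_act_mult minv_v[OF g])

definition leib_all :: "'n::finite sconst \<Rightarrow> bool" where
  "leib_all c \<longleftrightarrow> (\<forall>x y z. leibniz_identity c x y z)"

lemma leib_all_binary: "leib_all c \<Longrightarrow> binary_leibniz c"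
  by (simp add: leib_all_def binary_leibniz_def)

lemma is_product_pos: "is_product c m x \<Longrightarrow> m \<ge> 1"
  by (induction rule: is_product.induct) auto

lemma iso_in_variety:
  fixes c N :: "'n::finite sconst" and g :: "complex^'n^'n"
  assumes g: "invertible g"
    and h: "\<And>u w. alg_mult c (g *v u) (g *v w) = g *v alg_mult N u w"
    and L: "leib_all N" and nil: "nilpotent_alg N"
  shows "c \<in> nbl_variety"
proof -
  let ?h = "matrix_inv g"
  have h': "alg_mult c x y = g *v alg_mult N (?h *v x) (?h *v y)" for x y
    using h[of "?h *v x" "?h *v y"] by (simp add: minv_v[OF g])
  have "leib_all c"
    unfolding leib_all_def leibniz_identity_def
  proof (intro allI)
    fix x y z
    show "alg_mult c (alg_mult c x y) z = alg_mult c (alg_mult c x z) y + alg_mult c x (alg_mult c y z)"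
    proof -
      let ?x = "?h *v x" and ?y = "?h *v y" and ?z = "?h *v z"
      have e: "alg_mult N (alg_mult N ?x ?y) ?z = alg_mult N (alg_mult N ?x ?z) ?y + alg_mult N ?x (alg_mult N ?y ?z)"
        using L unfolding leib_all_def leibniz_identity_def by blast
      show ?thesis unfolding h' minv_v[OF g] e matrix_vector_right_distrib ..
    qed
  qed
  moreover have "nilpotent_alg c"
  proof -
    obtain m where m: "m > 0" "\<And>x. is_product N m x \<Longrightarrow> x = 0"
      using nil unfolding nilpotent_alg_def by blast
    have tr: "is_product c k p \<Longrightarrow> is_product N k (?h *v p)" for k p
    proof (induction rule: is_product.induct)
      case (prod_one x) then show ?case by (rule is_product.prod_one)
    next
      case (prod_mult i u j v)
      then show ?case by (simp add: h' minv_v[OF g] is_product.prod_mult)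
    qed
    have "is_product c m p \<Longrightarrow> p = 0" for p
      using m(2)[OF tr, of p] minv_v(1)[OF g, of p] by (metis matrix_vector_mult_0_right)
    with m(1) show ?thesis unfolding nilpotent_alg_def by blast
  qed
  ultimately show ?thesis unfolding nbl_variety_def by (simp add: leib_all_binary)
qed

definition idx :: "'n::finite \<Rightarrow> nat" where
  "idx = (SOME h. bij_betw h (UNIV::'n set) {0..<CARD('n)})"

lemma idx_bij: "bij_betw (idx::'n::finite \<Rightarrow> nat) UNIV {0..<CARD('n)}"
proof -
  have "\<exists>h. bij_betw h (UNIV::'n set) {0..<CARD('n)}" by (rule ex_bij_betw_finite_nat) simp
  from someI_ex[OF this] show ?thesis unfolding idx_def .
qed

definition ix :: "nat \<Rightarrow> 'n::finite" where "ix = inv_into UNIV idx"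

lemma idx_less: "idx (i::'n::finite) < CARD('n)"
proof -
  have "bij_betw (idx::'n\<Rightarrow>nat) UNIV {0..<CARD('n)}" by (rule idx_bij)
  then show ?thesis unfolding bij_betw_def by auto
qed

lemma ix_idx [simp]: "ix (idx (i::'n::finite)) = i"
  using idx_bij[where 'n='n] unfolding ix_def bij_betw_def by (simp add: inv_into_f_f)

lemma idx_ix: "k < CARD('n::finite) \<Longrightarrow> idx (ix k :: 'n) = k"
  using idx_bij[where 'n='n] unfolding ix_def bij_betw_def by (simp add: f_inv_into_f)

lemma idx_inj: "idx (i::'n::finite) = idx j \<longleftrightarrow> i = j"
  by (metis ix_idx)

lemma idx_ix0 [simp]: "idx (ix 0 :: 'n::finite) = 0"
  by (simp add: idx_ix)

definition Nf :: "'n::finite sconst" where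
  "Nf = (\<lambda>(i, j, k). if idx j = 0 \<and> idx k = Suc (idx i) then 1 else 0)"

lemma Nf_mult: "alg_mult Nf u w $ k = (if idx k = 0 then 0 else u $ ix (idx k - 1) * w $ ix 0)"
proof -
  have c: "(idx j = 0 \<and> idx k = Suc (idx i)) \<longleftrightarrow> (j = ix 0 \<and> idx k \<noteq> 0 \<and> i = ix (idx k - 1))"
    for i j :: 'a
  proof
    assume a: "idx j = 0 \<and> idx k = Suc (idx i)"
    then have "j = ix 0" by (metis ix_idx)
    moreover have "i = ix (idx k - 1)" using a by simp
    ultimately show "j = ix 0 \<and> idx k \<noteq> 0 \<and> i = ix (idx k - 1)" using a by simp
  next
    assume a: "j = ix 0 \<and> idx k \<noteq> 0 \<and> i = ix (idx k - 1)"
    have "idx k - 1 < CARD('a)" using idx_less[of k] by simp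
    then have "idx i = idx k - 1" using a idx_ix by blast
    then show "idx j = 0 \<and> idx k = Suc (idx i)" using a by simp
  qed
  have "alg_mult Nf u w $ k = (\<Sum>i\<in>UNIV. \<Sum>j\<in>UNIV. if i = ix (idx k - 1) \<and> idx k \<noteq> 0 then (if j = ix 0 then u$i * w$j else 0) else 0)"
    unfolding alg_mult_nth Nf_def using c by (intro sum.cong refl) auto
  also have "\<dots> = (\<Sum>i\<in>UNIV. if i = ix (idx k - 1) \<and> idx k \<noteq> 0 then u$i * w $ ix 0 else 0)"
  proof (rule sum.cong[OF refl])
    fix i :: 'a
    show "(\<Sum>j\<in>UNIV. if i = ix (idx k - 1) \<and> idx k \<noteq> 0 then (if j = ix 0 then u$i * w$j else 0) else 0)
        = (if i = ix (idx k - 1) \<and> idx k \<noteq> 0 then u$i * w $ ix 0 else 0)"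
    proof (cases "i = ix (idx k - 1) \<and> idx k \<noteq> 0")
      case True then show ?thesis by simp
    next
      case False then show ?thesis by (simp only: False if_False sum.neutral_const)
    qed
  qed
  also have "\<dots> = (if idx k = 0 then 0 else u $ ix (idx k - 1) * w $ ix 0)"
  proof (cases "idx k = 0")
    case True then show ?thesis by (simp only: True if_True if_False simp_thms sum.neutral_const)
  next
    case False then show ?thesis by simp
  qed
  finally show ?thesis .
qed


lemma idx_ix_pred [simp]: "idx (ix (idx (k::'n::finite) - 1) :: 'n) = idx k - 1"
  using idx_less[of k] by (intro idx_ix) simp

lemma ix_inj: "a < CARD('n::finite) \<Longrightarrow> b < CARD('n) \<Longrightarrow> (ix a :: 'n) = ix b \<longleftrightarrow> a = b"
  by (metis idx_ix)

lemma Nf_leib: "leib_all (Nf :: 'n::finite sconst)"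
  unfolding leib_all_def leibniz_identity_def
  by (simp add: vec_eq_iff Nf_mult)

lemma Nf_prod: "is_product (Nf :: 'n::finite sconst) m p \<Longrightarrow> idx k + 1 < m \<Longrightarrow> p $ k = 0"
proof (induction arbitrary: k rule: is_product.induct)
  case (prod_one x) then show ?case by simp
next
  case (prod_mult i u j v)
  have i1: "i \<ge> 1" and j1: "j \<ge> 1" using prod_mult.hyps is_product_pos by auto
  show ?case
  proof (cases "idx k = 0")
    case True then show ?thesis by (simp add: Nf_mult)
  next
    case False
    show ?thesis
    proof (cases "j = 1")
      case True
      then have "idx (ix (idx k - 1) :: 'n) + 1 < i"
        by (subst idx_ix_pred) (use prod_mult.prems False True in simp)
      then have "u $ ix (idx k - 1) = 0" by (rule prod_mult.IH(1))
      then show ?thesis by (simp add: Nf_mult)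
    next
      case False
      then have "idx (ix 0 :: 'n) + 1 < j" using j1 by simp
      then have "v $ ix 0 = 0" by (rule prod_mult.IH(2))
      then show ?thesis by (simp add: Nf_mult)
    qed
  qed
qed

lemma Nf_nil: "nilpotent_alg (Nf :: 'n::finite sconst)"
  unfolding nilpotent_alg_def
proof (intro exI[of _ "CARD('n) + 1"] conjI allI impI)
  fix x :: "complex^'n" assume "is_product Nf (CARD('n) + 1) x"
  then show "x = 0" using Nf_prod idx_less by (force simp: vec_eq_iff)
qed simp

definition rp :: "'n::finite sconst \<Rightarrow> complex^'n \<Rightarrow> complex^'n \<Rightarrow> nat \<Rightarrow> complex^'n" where
  "rp c x y k = ((\<lambda>v. alg_mult c v x) ^^ k) y"

lemma rp_0 [simp]: "rp c x y 0 = y" by (simp add: rp_def)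
lemma rp_Suc [simp]: "rp c x y (Suc k) = alg_mult c (rp c x y k) x" by (simp add: rp_def)

lemma Nf_pw: "k < CARD('n::finite) \<Longrightarrow> rp (Nf :: 'n sconst) (axis (ix 0) 1) (axis (ix 0) 1) k = axis (ix k) 1"
proof (induction k)
  case 0 then show ?case by simp
next
  case (Suc k)
  then have IH: "rp (Nf :: 'n sconst) (axis (ix 0) 1) (axis (ix 0) 1) k = axis (ix k) 1" by simp
  have "alg_mult Nf (axis (ix k) 1) (axis (ix 0 :: 'n) 1) = axis (ix (Suc k)) 1"
  proof (subst vec_eq_iff, intro allI)
    fix l :: 'n
    show "alg_mult Nf (axis (ix k) 1) (axis (ix 0 :: 'n) 1) $ l = axis (ix (Suc k)) 1 $ l"
    proof (cases "idx l = 0")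
      case True
      then have "l \<noteq> ix (Suc k)" using idx_ix[OF Suc.prems] by auto
      then show ?thesis using True by (simp add: Nf_mult axis_comp)
    next
      case False
      have "l = ix (Suc k) \<longleftrightarrow> idx l = Suc k" using idx_ix[OF Suc.prems] by (metis ix_idx)
      moreover have "ix (idx l - 1) = (ix k :: 'n) \<longleftrightarrow> idx l - 1 = k"
        using idx_less[of l] Suc.prems by (intro ix_inj) auto
      ultimately show ?thesis using False by (auto simp: Nf_mult axis_comp)
    qed
  qed
  then show ?case using IH by simp
qed


lemma mv_axis: "((g::complex^'n^'m) *v axis i 1) $ j = g $ j $ i"
proof -
  have "(\<Sum>l\<in>UNIV. g $ j $ l * axis i (1::complex) $ l) = (\<Sum>l\<in>UNIV. if l = i then g $ j $ i else 0)"
    by (rule sum.cong) (auto simp: axis_comp)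
  then show ?thesis by (simp add: matrix_vector_mult_def)
qed

definition KM :: "'n::finite sconst \<Rightarrow> complex^'n \<Rightarrow> complex^'n^'n" where
  "KM c x = (\<chi> i. rp c x x (idx i))"

lemma rp_sum: "rp c x (\<Sum>i\<in>I. f i) j = (\<Sum>i\<in>I. rp c x (f i) j)"
  by (induction j) (simp_all add: alg_mult_sum_left)

lemma rp_scale: "rp c x (r *s y) j = r *s rp c x y j"
  by (induction j) (simp_all add: alg_mult_scale_left)

lemma rp_rp: "rp c x (rp c x y l) j = rp c x y (l + j)"
  by (induction j) simp_all

lemma rp_zero: "rp c x 0 j = 0"
  by (induction j) simp_all

lemma rp_prod: "is_product c (Suc k) (rp c x x k)"
proof (induction k)
  case 0 then show ?case using is_product.prod_one[of c x] by simp
next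
  case (Suc k)
  have "is_product c (Suc k + 1) (alg_mult c (rp c x x k) x)"
    by (rule is_product.prod_mult[OF Suc is_product.prod_one])
  then show ?case by simp
qed

lemma orbit_KM:
  assumes g: "invertible g"
  shows "det (KM (gl_act g (Nf :: 'n::finite sconst)) (g *v axis (ix 0) 1)) \<noteq> 0"
proof -
  let ?c = "gl_act g (Nf :: 'n sconst)" and ?e = "axis (ix 0) 1 :: complex^'n"
  have r: "rp ?c (g *v ?e) (g *v ?e) k = g *v rp Nf ?e ?e k" for k
    by (induction k) (simp_all add: g_iso_mult[OF g])
  have ax: "rp Nf ?e ?e (idx i) = axis i 1" for i
    using Nf_pw[OF idx_less, of i] by simp
  have "KM ?c (g *v ?e) = transpose g"
    unfolding KM_def r ax
    by (simp add: vec_eq_iff mv_axis transpose_def)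
  then show ?thesis using g by (simp add: invertible_det_nz)
qed

lemma subalg_rp: "rp c x x k \<in> gen_subalg c x x"
  by (induction k) (auto intro: gen_subalg.intros)

lemma leib_kill:
  assumes bl: "binary_leibniz c" and k: "k \<ge> 1"
  shows "\<forall>u\<in>gen_subalg c x x. alg_mult c u (rp c x x k) = 0"
  using k
proof (induction k)
  case 0 then show ?case by simp
next
  case (Suc k)
  have L: "leibniz_identity c a b d" if "a \<in> gen_subalg c x x" "b \<in> gen_subalg c x x" "d \<in> gen_subalg c x x" for a b d
    using bl that unfolding binary_leibniz_def by blast
  have xS: "x \<in> gen_subalg c x x" by (rule gen_subalg.gen_a)
  show ?case
  proof
    fix u assume uS: "u \<in> gen_subalg c x x"
    show "alg_mult c u (rp c x x (Suc k)) = 0"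
    proof (cases "k = 0")
      case True
      have "alg_mult c (alg_mult c u x) x = alg_mult c (alg_mult c u x) x + alg_mult c u (alg_mult c x x)"
        using L[OF uS xS xS] unfolding leibniz_identity_def .
      then show ?thesis using True by simp
    next
      case False
      then have IH: "\<forall>u\<in>gen_subalg c x x. alg_mult c u (rp c x x k) = 0" using Suc.IH by simp
      have uxS: "alg_mult c u x \<in> gen_subalg c x x" using uS xS by (rule gen_subalg.gen_mult)
      have "alg_mult c (alg_mult c u (rp c x x k)) x = alg_mult c (alg_mult c u x) (rp c x x k) + alg_mult c u (alg_mult c (rp c x x k) x)"
        using L[OF uS subalg_rp xS] unfolding leibniz_identity_def .
      then show ?thesis using IH uS uxS by simp
    qed
  qed
qed


lemma KM_col: "transpose (KM c x) *v axis i 1 = rp c x x (idx i)"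
  by (simp add: vec_eq_iff mv_axis transpose_def KM_def)

lemma nil_top:
  fixes c :: "'n::finite sconst"
  assumes nil: "nilpotent_alg c" and d: "det (KM c x) \<noteq> 0"
  shows "rp c x x CARD('n) = 0"
proof (rule ccontr)
  let ?p = "rp c x x" and ?n = "CARD('n)"
  let ?g = "transpose (KM c x)"
  assume pn: "?p ?n \<noteq> 0"
  have g: "invertible ?g" using d by (simp add: invertible_det_nz)
  obtain m where m: "m > 0" "\<And>y. is_product c m y \<Longrightarrow> y = 0"
    using nil unfolding nilpotent_alg_def by blast
  have "is_product c m (?p (m - 1))" using rp_prod[of c "m - 1" x] m(1) by simp
  then have pm: "?p (m - 1) = 0" by (rule m(2))
  have big: "?p k = 0" if "k \<ge> m - 1" for k
  proof -
    have "?p k = rp c x (?p (m - 1)) (k - (m - 1))" using that by (simp add: rp_rp)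
    also have "\<dots> = 0" unfolding pm by (rule rp_zero)
    finally show ?thesis .
  qed
  let ?S = "{k. ?p k \<noteq> 0}"
  have finS: "finite ?S"
    by (rule finite_subset[of _ "{..<m - 1}"]) (auto simp: not_less intro: big)
  have nS: "?n \<in> ?S" using pn by simp
  define K where "K = Max ?S"
  have pK: "?p K \<noteq> 0" unfolding K_def using Max_in[OF finS] nS by blast
  have Kn: "K \<ge> ?n" unfolding K_def using Max_ge[OF finS nS] .
  have above: "?p k = 0" if "k > K" for k
    using that Max_ge[OF finS, of k] unfolding K_def by force
  define a where "a = matrix_inv ?g *v ?p ?n"
  have pa: "?p ?n = (\<Sum>i\<in>UNIV. a$i *s ?p (idx i))"
  proof -
    have "?p ?n = ?g *v a" unfolding a_def by (rule minv_v(1)[OF g, symmetric])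
    also have "\<dots> = (\<Sum>i\<in>UNIV. a$i *s ?p (idx i))" by (subst mv_expand) (simp only: KM_col)
    finally show ?thesis .
  qed
  have "a \<noteq> 0" using pn unfolding a_def by (metis minv_v(1)[OF g] matrix_vector_mult_0_right)
  then obtain i1 where "a $ i1 \<noteq> 0" by (auto simp: vec_eq_iff)
  then obtain i0 where i0: "a $ i0 \<noteq> 0" "\<And>i. a $ i \<noteq> 0 \<Longrightarrow> idx i0 \<le> idx i"
    using ex_has_least_nat[of "\<lambda>i. a $ i \<noteq> 0" i1 idx] by blast
  define j where "j = K - idx i0"
  have "?p (?n + j) = 0" using idx_less[of i0] Kn by (intro above) (simp add: j_def)
  moreover have "?p (?n + j) = (\<Sum>i\<in>UNIV. a$i *s ?p (idx i + j))"
    by (subst rp_rp[symmetric]) (simp add: pa rp_sum rp_scale rp_rp)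
  moreover have "(\<Sum>i\<in>UNIV. a$i *s ?p (idx i + j)) = (\<Sum>i\<in>UNIV. if i = i0 then a$i0 *s ?p K else 0)"
  proof (rule sum.cong[OF refl])
    fix i
    show "a$i *s ?p (idx i + j) = (if i = i0 then a$i0 *s ?p K else 0)"
    proof (cases "i = i0")
      case True then show ?thesis using Kn idx_less[of i0] by (simp add: j_def)
    next
      case False
      show ?thesis
      proof (cases "a $ i = 0")
        case True then show ?thesis using False by (simp add: vec_eq_iff)
      next
        case nz: False
        have "idx i0 \<le> idx i" using i0(2)[OF nz] .
        moreover have "idx i \<noteq> idx i0" using False idx_inj by blast
        ultimately have "idx i + j > K" using Kn idx_less[of i0] by (simp add: j_def)
        then show ?thesis using False above by simp
      qed
    qed
  qed
  ultimately have "a$i0 *s ?p K = 0" by simp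
  then show False using i0(1) pK by (simp add: vec_eq_iff)
qed


lemma KM_col2: "axis i 1 v* KM c x = rp c x x (idx i)"
  using KM_col[of c x i] by simp

lemma Nf_axis: "alg_mult (Nf :: 'n::finite sconst) (axis i 1) (axis j 1) =
   (if idx j = 0 \<and> Suc (idx i) < CARD('n) then axis (ix (Suc (idx i))) 1 else 0)"
proof (subst vec_eq_iff, intro allI)
  fix k :: 'n
  show "alg_mult Nf (axis i 1) (axis j 1) $ k = (if idx j = 0 \<and> Suc (idx i) < CARD('n) then axis (ix (Suc (idx i))) 1 else 0) $ k"
  proof (cases "Suc (idx i) < CARD('n)")
    case True
    have "k = ix (Suc (idx i)) \<longleftrightarrow> idx k = Suc (idx i)" using idx_ix[OF True] by (metis ix_idx)
    then show ?thesis using True by (auto simp: alg_mult_axis Nf_def axis_comp)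
  next
    case False
    then have "idx k \<noteq> Suc (idx i)" using idx_less[of k] by auto
    then show ?thesis using False by (auto simp: alg_mult_axis Nf_def)
  qed
qed

lemma to_orbit:
  fixes c :: "'n::finite sconst"
  assumes X: "c \<in> nbl_variety" and d: "det (KM c x) \<noteq> 0"
  shows "c \<in> orbit Nf"
proof -
  let ?g = "transpose (KM c x)" and ?p = "rp c x x"
  have g: "invertible ?g" using d by (simp add: invertible_det_nz)
  have nil: "nilpotent_alg c" and bl: "binary_leibniz c" using X by (auto simp: nbl_variety_def)
  have top: "?p CARD('n) = 0" by (rule nil_top[OF nil d])
  have key: "alg_mult c (?g *v axis i 1) (?g *v axis j 1) = ?g *v alg_mult Nf (axis i 1) (axis j 1)" for i j
  proof (cases "idx j = 0")
    case True
    then have xj: "?g *v axis j 1 = x" by (simp add: KM_col KM_col2)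
    show ?thesis
    proof (cases "Suc (idx i) < CARD('n)")
      case True2: True
      show ?thesis using True True2 xj by (simp add: Nf_axis KM_col KM_col2 idx_ix)
    next
      case False
      then have e: "Suc (idx i) = CARD('n)" using idx_less[of i] by simp
      have "alg_mult c (?p (idx i)) x = ?p (Suc (idx i))" by simp
      then have "alg_mult c (?p (idx i)) x = 0" using top unfolding e by simp
      then show ?thesis using True xj e by (simp add: Nf_axis KM_col KM_col2)
    qed
  next
    case False
    have "alg_mult c (?p (idx i)) (?p (idx j)) = 0"
      using leib_kill[OF bl, of "idx j" x] False subalg_rp[of c x "idx i"] by simp
    then show ?thesis using False by (simp add: Nf_axis KM_col KM_col2)
  qed
  have iso: "alg_mult c (?g *v u) (?g *v w) = ?g *v alg_mult Nf u w" for u w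
  proof -
    have "alg_mult c (?g *v u) (?g *v w) = alg_mult c (\<Sum>i\<in>UNIV. u$i *s (?g *v axis i 1)) (\<Sum>j\<in>UNIV. w$j *s (?g *v axis j 1))"
      by (simp only: mv_expand[of ?g u] mv_expand[of ?g w])
    also have "\<dots> = (\<Sum>i\<in>UNIV. \<Sum>j\<in>UNIV. (u$i * w$j) *s alg_mult c (?g *v axis i 1) (?g *v axis j 1))"
      by (rule alg_mult_expand2)
    also have "\<dots> = (\<Sum>i\<in>UNIV. \<Sum>j\<in>UNIV. (u$i * w$j) *s (?g *v alg_mult Nf (axis i 1) (axis j 1)))"
      by (simp only: key)
    also have "\<dots> = ?g *v (\<Sum>i\<in>UNIV. \<Sum>j\<in>UNIV. (u$i * w$j) *s alg_mult Nf (axis i 1) (axis j 1))"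
      by (simp only: mv_sum mv_scale)
    also have "\<dots> = ?g *v alg_mult Nf u w"
      by (simp only: alg_mult_expand[of Nf u w, symmetric])
    finally show ?thesis .
  qed
  have e: "gl_act ?g Nf = c" by (rule iso_gl_act[OF g iso])
  show ?thesis unfolding orbit_def
    by (rule CollectI, rule exI[of _ ?g]) (simp add: e g)
qed


lemma pf_sum: "finite I \<Longrightarrow> (\<And>i. i \<in> I \<Longrightarrow> poly_fun (f i)) \<Longrightarrow> poly_fun (\<lambda>x. \<Sum>i\<in>I. f i x)"
proof (induction I rule: finite_induct)
  case empty then show ?case using pf_const[of 0] by simp
next
  case (insert a F)
  then show ?case using pf_add[of "f a" "\<lambda>x. \<Sum>i\<in>F. f i x"] by simp
qed

lemma pf_prod: "finite I \<Longrightarrow> (\<And>i. i \<in> I \<Longrightarrow> poly_fun (f i)) \<Longrightarrow> poly_fun (\<lambda>x. \<Prod>i\<in>I. f i x)"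
proof (induction I rule: finite_induct)
  case empty then show ?case using pf_const[of 1] by simp
next
  case (insert a F)
  then show ?case using pf_mult[of "f a" "\<lambda>x. \<Prod>i\<in>F. f i x"] by simp
qed

lemma pf_rp: "poly_fun (\<lambda>c::'n::finite sconst. rp c x x k $ l)"
proof (induction k arbitrary: l)
  case 0 then show ?case by (simp add: pf_const)
next
  case (Suc k)
  show ?case unfolding rp_Suc alg_mult_nth
    by (intro pf_sum pf_mult Suc pf_const pf_var) simp_all
qed

lemma pf_det: "poly_fun (\<lambda>c::'n::finite sconst. det (KM c x))"
  unfolding det_def KM_def
  by (intro pf_sum pf_mult pf_const pf_prod pf_rp) (simp_all add: finite_permutations pf_rp)

theorem mainTheorem7:
  shows "\<exists>c :: 'n::finite sconst. rigid_in nbl_variety c"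
proof (intro exI[of _ Nf])
  let ?Z = "{c::'n sconst. \<forall>x. det (KM c x) = 0}"
  have NX: "(Nf :: 'n sconst) \<in> nbl_variety"
    unfolding nbl_variety_def using Nf_leib Nf_nil leib_all_binary by blast
  have Zc: "zariski_closed ?Z"
    unfolding zariski_closed_def
    by (rule exI[of _ "{\<lambda>c. det (KM c x) | x. True}"]) (auto simp: pf_det)
  have "orbit Nf = nbl_variety - ?Z"
  proof
    show "orbit Nf \<subseteq> nbl_variety - ?Z"
    proof
      fix c assume "c \<in> orbit (Nf :: 'n sconst)"
      then obtain g where g: "invertible g" and c: "c = gl_act g Nf" unfolding orbit_def by blast
      have "c \<in> nbl_variety" unfolding c
        by (rule iso_in_variety[OF g g_iso_mult[OF g] Nf_leib Nf_nil])
      moreover have "c \<notin> ?Z" using orbit_KM[OF g] unfolding c by blast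
      ultimately show "c \<in> nbl_variety - ?Z" by blast
    qed
  next
    show "nbl_variety - ?Z \<subseteq> orbit Nf"
      using to_orbit by blast
  qed
  then show "rigid_in nbl_variety (Nf :: 'n sconst)"
    unfolding rigid_in_def zariski_open_in_def using NX Zc by blast
qed

end
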